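(* In the setting below, for every $p\ge1$ and $n\ge1$ the minimization problem $$\inf_{\lambda\in\mathbb R^{A^{\otimes d}_{p,n}},\ \lambda_0=0} V_{p,n}(\lambda)$$ has at least one solution.
   Context: Let $T>0$, let $B=(B^1,\dots,B^d)$ be a $d$-dimensional standard Brownian motion on $(\Omega,\mathcal F,\mathbb P)$ and $(\mathcal F_t)_{0\le t\le T}$ its natural augmented filtration. Let $(Z_t)_{0\le t\le T}$ be a real-valued adapted process with right-continuous paths and $\sup_{t\in[0,T]}|Z_t|\in L^2$ (the discounted payoff). Let $n\ge1$, $h=T/n$, $t_k=kh$, and $G^j_i=(B^j_{t_i}-B^j_{t_{i-1}})/\sqrt h$ for $1\le i\le n$, $1\le j\le d$. With $H_m$ the Hermite polynomials $H_0=1$, $H_m(x)=(-1)^m e^{x^2/2}\frac{d^m}{dx^m}e^{-x^2/2}$, and $\alpha=(\alpha^j_i)\in(\mathbb N^n)^d$, set $\widehat H^{\otimes d}_\alpha(G)=\prod_{j=1}^d\prod_{i=1}^nH_{\alpha^j_i}(G^j_i)$, $\|\alpha\|_1=\sum_{i,j}\alpha^j_i$, $A^{\otimes d}_{p,n}=\{\alpha:\|\alpha\|_1\le p\}$, and $A^{\otimes d,k}_{p,n}=\{\alpha\in A^{\otimes d}_{p,n}:\alpha^j_\ell=0\ \forall j,\ \forall \ell>k\}$ (so $A^{\otimes d,0}_{p,n}=\{0\}$). For $\lambda\in\mathbb R^{A^{\otimes d}_{p,n}}$, $\lambda_0$ denotes the coefficient of the zero multi-index. Define, for $0\le k\le n$,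 $$v_{p,n}(\lambda,k;Z,G)=Z_{t_k}-\sum_{\alpha\in A^{\otimes d,k}_{p,n}}\lambda_\alpha\widehat H^{\otimes d}_\alpha(G)\quad\Big(=Z_{t_k}-\mathbb E\Big[\textstyle\sum_{\alpha\in A^{\otimes d}_{p,n}}\lambda_\alpha\widehat H^{\otimes d}_\alpha(G)\,\Big|\,\mathcal F_{t_k}\Big]\Big),$$ and $V_{p,n}(\lambda)=\mathbb E\big[\max_{0\le k\le n}v_{p,n}(\lambda,k;Z,G)\big]$. *)

theory Defs
  imports "HOL-Probability.Probability"
begin

definition hermite :: "nat \<Rightarrow> real \<Rightarrow> real" where
  "hermite m x = (-1) ^ m * exp (x^2 / 2) * (deriv ^^ m) (\<lambda>y. exp (- (y^2) / 2)) x"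

definition std_BM :: "'a measure \<Rightarrow> nat \<Rightarrow> real \<Rightarrow> (nat \<Rightarrow> real \<Rightarrow> 'a \<Rightarrow> real) \<Rightarrow> bool" where
  "std_BM M d T B \<longleftrightarrow>
     (\<forall>j<d. \<forall>t\<in>{0..T}. B j t \<in> borel_measurable M) \<and>
     (\<forall>j<d. AE \<omega> in M. B j 0 \<omega> = 0) \<and>
     (\<forall>j<d. AE \<omega> in M. continuous_on {0..T} (\<lambda>t. B j t \<omega>)) \<and>
     (\<forall>(ts :: nat \<Rightarrow> real) m. (\<forall>i<m. ts i < ts (Suc i)) \<and> 0 \<le> ts 0 \<and> ts m \<le> T \<longrightarrow>
        prob_space.indep_vars M (\<lambda>_. borel)
          (\<lambda>(j, i) \<omega>. B j (ts (Suc i)) \<omega> - B j (ts i) \<omega>) ({..<d} \<times> {..<m}) \<and>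
        (\<forall>j<d. \<forall>i<m. distributed M lborel (\<lambda>\<omega>. B j (ts (Suc i)) \<omega> - B j (ts i) \<omega>)
                          (normal_density 0 (sqrt (ts (Suc i) - ts i)))))"

definition BM_filtration :: "'a measure \<Rightarrow> nat \<Rightarrow> (nat \<Rightarrow> real \<Rightarrow> 'a \<Rightarrow> real) \<Rightarrow> real \<Rightarrow> 'a measure" where
  "BM_filtration M d B t = sigma (space M)
     ({B j s -` A \<inter> space M | j s A. j < d \<and> s \<in> {0..t} \<and> A \<in> sets borel} \<union> null_sets M)"

definition grid :: "real \<Rightarrow> nat \<Rightarrow> nat \<Rightarrow> real" where
  "grid T n k = real k * (T / real n)"

definition Gincr :: "(nat \<Rightarrow> real \<Rightarrow> 'a \<Rightarrow> real) \<Rightarrow> real \<Rightarrow> nat \<Rightarrow> nat \<Rightarrow> nat \<Rightarrow> 'a \<Rightarrow> real" where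
  "Gincr B T n j i \<omega> = (B j (grid T n i) \<omega> - B j (grid T n (i - 1)) \<omega>) / sqrt (T / real n)"

text \<open>Multi-indices alpha = (alpha^j_i), j < d, 1 <= i <= n, represented as functions
  alpha j i vanishing outside that range.\<close>
definition mindex_set :: "nat \<Rightarrow> nat \<Rightarrow> nat \<Rightarrow> (nat \<Rightarrow> nat \<Rightarrow> nat) set" where
  "mindex_set d p n = {\<alpha>. (\<forall>j i. \<alpha> j i \<noteq> 0 \<longrightarrow> j < d \<and> 1 \<le> i \<and> i \<le> n) \<and>
                          (\<Sum>j<d. \<Sum>i=1..n. \<alpha> j i) \<le> p}"

definition mindex_set_k :: "nat \<Rightarrow> nat \<Rightarrow> nat \<Rightarrow> nat \<Rightarrow> (nat \<Rightarrow> nat \<Rightarrow> nat) set" where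
  "mindex_set_k d p n k = {\<alpha> \<in> mindex_set d p n. \<forall>j i. k < i \<longrightarrow> \<alpha> j i = 0}"

definition zero_mindex :: "nat \<Rightarrow> nat \<Rightarrow> nat" where
  "zero_mindex = (\<lambda>_ _. 0)"

definition hermite_prod :: "nat \<Rightarrow> nat \<Rightarrow> (nat \<Rightarrow> real \<Rightarrow> 'a \<Rightarrow> real) \<Rightarrow> real \<Rightarrow> (nat \<Rightarrow> nat \<Rightarrow> nat) \<Rightarrow> 'a \<Rightarrow> real" where
  "hermite_prod d n B T \<alpha> \<omega> = (\<Prod>j<d. \<Prod>i=1..n. hermite (\<alpha> j i) (Gincr B T n j i \<omega>))"

definition v_pn :: "nat \<Rightarrow> (nat \<Rightarrow> real \<Rightarrow> 'a \<Rightarrow> real) \<Rightarrow> real \<Rightarrow> (real \<Rightarrow> 'a \<Rightarrow> real) \<Rightarrow> nat \<Rightarrow> nat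
     \<Rightarrow> ((nat \<Rightarrow> nat \<Rightarrow> nat) \<Rightarrow> real) \<Rightarrow> nat \<Rightarrow> 'a \<Rightarrow> real" where
  "v_pn d B T Z p n lam k \<omega> = Z (grid T n k) \<omega>
      - (\<Sum>\<alpha>\<in>mindex_set_k d p n k. lam \<alpha> * hermite_prod d n B T \<alpha> \<omega>)"

definition V_pn :: "'a measure \<Rightarrow> nat \<Rightarrow> (nat \<Rightarrow> real \<Rightarrow> 'a \<Rightarrow> real) \<Rightarrow> real \<Rightarrow> (real \<Rightarrow> 'a \<Rightarrow> real)
     \<Rightarrow> nat \<Rightarrow> nat \<Rightarrow> ((nat \<Rightarrow> nat \<Rightarrow> nat) \<Rightarrow> real) \<Rightarrow> real" where
  "V_pn M d B T Z p n lam = (\<integral>\<omega>. Max ((\<lambda>k. v_pn d B T Z p n lam k \<omega>) ` {0..n}) \<partial>M)"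

end

theory Submission
  imports Defs "HOL-Computational_Algebra.Polynomial"
begin



fun he :: "nat \<Rightarrow> real poly" where
  "he 0 = 1"
| "he (Suc m) = pCons 0 (he m) - pderiv (he m)"

lemma deriv_iter_gauss:
  "(deriv ^^ m) (\<lambda>y. exp (- (y^2) / 2)) = (\<lambda>x. (-1)^m * poly (he m) x * exp (- (x^2) / 2))"
proof (induction m)
  case 0
  then show ?case by simp
next
  case (Suc m)
  have "deriv (\<lambda>x. (-1)^m * poly (he m) x * exp (- (x^2) / 2)) x =
        (-1)^(Suc m) * poly (he (Suc m)) x * exp (- (x^2) / 2)" for x
  proof (rule DERIV_imp_deriv)
    have "((\<lambda>x. (-1)^m * poly (he m) x * exp (- (x^2) / 2)) has_real_derivative
       (-1)^m * poly (pderiv (he m)) x * exp (- (x^2) / 2) + (-1)^m * poly (he m) x * (exp (- (x^2) / 2) * (- x))) (at x)"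
      by (auto intro!: derivative_eq_intros poly_DERIV simp: power2_eq_square)
    then show "((\<lambda>x. (-1)^m * poly (he m) x * exp (- (x^2) / 2)) has_real_derivative
       (-1)^(Suc m) * poly (he (Suc m)) x * exp (- (x^2) / 2)) (at x)"
      by (rule DERIV_cong) (simp add: algebra_simps)
  qed
  note * = this
  show ?case by (simp only: funpow.simps comp_def Suc.IH) (rule ext, rule *)
qed

lemma hermite_he: "hermite m x = poly (he m) x"
proof -
  have "exp (x^2/2) * exp (- (x^2) / 2) = 1"
    by (simp add: exp_add[symmetric])
  then show ?thesis
    unfolding hermite_def deriv_iter_gauss
    by (simp add: algebra_simps power_mult_distrib[symmetric])
qed


subsection \<open>Gaussian expectation of polynomials\<close>

definition mom :: "nat \<Rightarrow> real" where
  "mom k = (\<integral>x. std_normal_density x * x ^ k \<partial>lborel)"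

definition Dg :: "real poly \<Rightarrow> real" where
  "Dg s = (\<integral>x. std_normal_density x * poly s x \<partial>lborel)"

lemma integrable_Dg: "integrable lborel (\<lambda>x. std_normal_density x * poly s x)"
proof -
  have "(\<lambda>x. std_normal_density x * poly s x) = (\<lambda>x. \<Sum>i\<le>degree s. coeff s i * (std_normal_density x * x ^ i))"
    by (simp add: poly_altdef sum_distrib_left algebra_simps)
  then show ?thesis
    by (simp add: integrable_std_normal_moment)
qed

lemma Dg_altdef: "Dg s = (\<Sum>i\<le>degree s. coeff s i * mom i)"
proof -
  have "(\<lambda>x. std_normal_density x * poly s x) = (\<lambda>x. \<Sum>i\<le>degree s. coeff s i * (std_normal_density x * x ^ i))"
    by (simp add: poly_altdef sum_distrib_left algebra_simps)
  then show ?thesis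
    unfolding Dg_def mom_def
    by (simp add: integrable_std_normal_moment)
qed

lemma Dg_add: "Dg (p + q) = Dg p + Dg q"
  unfolding Dg_def by (simp add: distrib_left integrable_Dg)

lemma Dg_diff: "Dg (p - q) = Dg p - Dg q"
  unfolding Dg_def by (simp add: right_diff_distrib integrable_Dg)

lemma Dg_smult: "Dg (smult c p) = c * Dg p"
  unfolding Dg_def by (simp add: algebra_simps)

lemma Dg_sum: "finite A \<Longrightarrow> Dg (\<Sum>i\<in>A. f i) = (\<Sum>i\<in>A. Dg (f i))"
  by (induction A rule: finite_induct) (simp_all add: Dg_add, simp add: Dg_def)

lemma Dg_0[simp]: "Dg 0 = 0"
  unfolding Dg_def by simp

lemma Dg_monom: "Dg (monom c k) = c * mom k"
  unfolding Dg_def mom_def by (simp add: poly_monom algebra_simps)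

lemma mom_0: "mom 0 = 1"
  unfolding mom_def by simp

lemma mom_rec: "mom (Suc k) = real k * mom (k - 1)"
proof (cases "even k")
  case True
  then obtain j where k: "k = 2 * j" by blast
  have "mom (Suc k) = 0" unfolding mom_def k
    using integral_std_normal_moment_odd[of j] by simp
  moreover have "real k * mom (k - 1) = 0"
  proof (cases j)
    case 0 then show ?thesis by (simp add: k)
  next
    case (Suc j')
    then have "k - 1 = 2 * j' + 1" using k by simp
    then show ?thesis unfolding mom_def
      using integral_std_normal_moment_odd[of j'] by simp
  qed
  ultimately show ?thesis by simp
next
  case False
  then obtain j where k: "k = 2 * j + 1" by (metis oddE)
  have 1: "mom (Suc k) = fact (2 * (Suc j)) / (2^(Suc j) * fact (Suc j))"
    unfolding mom_def using integral_std_normal_moment_even[of "Suc j"] k by simp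
  have 2: "mom (k - 1) = fact (2 * j) / (2^j * fact j)"
    unfolding mom_def using integral_std_normal_moment_even[of j] k by simp
  define F :: real where "F = fact (2 * j)"
  define Fj :: real where "Fj = fact j"
  have f1: "fact (2 * (Suc j)) = (2 * real j + 2) * (2 * real j + 1) * F"
    unfolding F_def by (simp add: fact_Suc algebra_simps)
  have f2: "fact (Suc j) = (real j + 1) * Fj" unfolding Fj_def by (simp add: fact_Suc)
  have pos: "F > 0" "Fj > 0" unfolding F_def Fj_def by simp_all
  have kr: "real k = 2 * real j + 1" "k - 1 = 2 * j" using k by simp_all
  have "mom (Suc k) = (2 * real j + 2) * (2 * real j + 1) * F / (2 * 2^j * ((real j + 1) * Fj))"
    unfolding 1 f1 f2 by simp
  also have "\<dots> = (2 * real j + 1) * (F / (2^j * Fj))"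
  proof -
    have e1: "(2 * real j + 2) * (2 * real j + 1) * F = (2 * real j + 1) * F * (2 * (real j + 1))"
      by (simp add: algebra_simps)
    have e2: "2 * 2^j * ((real j + 1) * Fj) = 2^j * Fj * (2 * (real j + 1))"
      by (simp add: algebra_simps)
    have nz: "2 * (real j + 1) \<noteq> 0" by (smt (verit) of_nat_0_le_iff)
    show ?thesis unfolding e1 e2 nonzero_mult_divide_mult_cancel_right[OF nz] by simp
  qed
  also have "\<dots> = real k * mom (k - 1)"
    unfolding kr 2 F_def Fj_def using 2 kr by simp
  finally show ?thesis .
qed

definition Lop :: "real poly \<Rightarrow> real poly" where
  "Lop u = pderiv u - pCons 0 u"

lemma Dg_Lop_monom: "Dg (Lop (monom 1 k)) = 0"
proof -
  have "Lop (monom 1 k) = monom (real k) (k - 1) - monom 1 (Suc k)"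
    unfolding Lop_def by (simp add: pderiv_monom monom_Suc)
  then show ?thesis by (simp add: Dg_diff Dg_monom mom_rec)
qed

lemma Lop_add: "Lop (p + q) = Lop p + Lop q"
  unfolding Lop_def by (simp add: pderiv_add)

lemma Lop_smult: "Lop (smult c p) = smult c (Lop p)"
  unfolding Lop_def by (simp add: pderiv_smult smult_diff_right)

lemma Lop_sum: "finite A \<Longrightarrow> Lop (\<Sum>i\<in>A. f i) = (\<Sum>i\<in>A. Lop (f i))"
  by (induction A rule: finite_induct) (simp_all add: Lop_add, simp add: Lop_def)

lemma Dg_Lop: "Dg (Lop u) = 0"
proof -
  have "Lop u = Lop (\<Sum>i\<le>degree u. smult (coeff u i) (monom 1 i))"
    by (simp add: smult_monom poly_as_sum_of_monoms)
  also have "\<dots> = (\<Sum>i\<le>degree u. smult (coeff u i) (Lop (monom 1 i)))"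
    by (simp add: Lop_sum Lop_smult)
  finally show ?thesis
    by (simp add: Dg_sum Dg_smult Dg_Lop_monom)
qed


lemma Dg_he_Suc: "Dg (q * he (Suc m)) = Dg (pderiv q * he m)"
proof -
  have "Lop (q * he m) = pderiv q * he m - q * he (Suc m)"
    unfolding Lop_def by (simp add: pderiv_mult mult_pCons_right algebra_simps)
  then show ?thesis using Dg_Lop[of "q * he m"] by (simp add: Dg_diff)
qed

lemma Dg_he: "Dg (q * he m) = Dg ((pderiv ^^ m) q)"
proof (induction m arbitrary: q)
  case 0
  then show ?case by simp
next
  case (Suc m)
  then show ?case by (simp add: Dg_he_Suc funpow_Suc_right del: he.simps funpow.simps)
qed

lemma pderiv_iter_0: "(pderiv ^^ m) 0 = (0 :: real poly)"
  by (induction m) (simp_all add: pderiv_0)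

lemma pderiv_iter_low: "degree (q :: real poly) < m \<Longrightarrow> (pderiv ^^ m) q = 0"
proof (induction m arbitrary: q)
  case 0
  then show ?case by simp
next
  case (Suc m)
  show ?case
  proof (cases "degree q = 0")
    case True
    then obtain c where "q = [:c:]" by (meson degree_eq_zeroE)
    then show ?thesis by (simp add: funpow_Suc_right pderiv_iter_0 del: funpow.simps)
  next
    case False
    then have "degree (pderiv q) < m" using Suc.prems by (simp add: degree_pderiv)
    then show ?thesis using Suc.IH by (simp add: funpow_Suc_right del: funpow.simps)
  qed
qed

lemma pderiv_iter_add: "(pderiv ^^ m) (p + q) = (pderiv ^^ m) p + (pderiv ^^ m) (q :: real poly)"
  by (induction m) (simp_all add: pderiv_add)

lemma pderiv_iter_monom: "(pderiv ^^ m) (monom a m) = [:a * fact m:]"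
proof (induction m arbitrary: a)
  case 0
  then show ?case by (simp add: monom_0)
next
  case (Suc m)
  then show ?case
    by (simp add: funpow_Suc_right pderiv_monom algebra_simps del: funpow.simps)
qed

lemma he_deg: "degree (he m) = m \<and> coeff (he m) m = 1"
proof (induction m)
  case 0
  then show ?case by simp
next
  case (Suc m)
  have ne: "he m \<noteq> 0" using Suc by auto
  have d1: "degree (pCons 0 (he m)) = Suc m" using Suc ne by simp
  have d2: "degree (pderiv (he m)) < Suc m" using Suc by (simp add: degree_pderiv)
  have "degree (he (Suc m)) = Suc m"
    using d1 d2 degree_add_eq_left[of "- pderiv (he m)" "pCons 0 (he m)"] by simp
  moreover have "coeff (he (Suc m)) (Suc m) = 1"
    using Suc d2 by (simp add: coeff_eq_0)
  ultimately show ?case by simp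
qed

lemma he_split: "m > 0 \<Longrightarrow> \<exists>r. he m = monom 1 m + r \<and> degree r < m"
proof -
  assume m: "m > 0"
  define r where "r = he m - monom 1 m"
  have "coeff r m = 0" using he_deg[of m] by (simp add: r_def)
  moreover have "degree r \<le> m" unfolding r_def using he_deg[of m]
    by (intro degree_diff_le) (simp_all add: degree_monom_le)
  ultimately have "degree r < m \<or> r = 0"
    by (metis leading_coeff_0_iff le_neq_implies_less)
  then have "degree r < m" using m by auto
  moreover have "he m = monom 1 m + r" by (simp add: r_def)
  ultimately show ?thesis by blast
qed

lemma Dg_he_he: "Dg (he a * he b) = (if a = b then fact a else 0)"
proof -
  have lt: "Dg (he a * he b) = 0" if "a < b" for a b
  proof -
    have "Dg (he a * he b) = Dg ((pderiv ^^ b) (he a))" by (rule Dg_he)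
    also have "\<dots> = 0" using that he_deg[of a] by (simp add: pderiv_iter_low)
    finally show ?thesis .
  qed
  have eq: "Dg (he a * he a) = fact a"
  proof (cases "a = 0")
    case True
    then show ?thesis by (simp add: Dg_def)
  next
    case False
    then obtain r where r: "he a = monom 1 a + r" "degree r < a" using he_split by blast
    have "Dg (he a * he a) = Dg ((pderiv ^^ a) (he a))" by (rule Dg_he)
    also have "\<dots> = Dg [:fact a:]"
      by (simp add: r(1) pderiv_iter_add pderiv_iter_monom pderiv_iter_low[OF r(2)])
    also have "\<dots> = fact a" using Dg_monom[of "fact a" 0] by (simp add: mom_0 monom_0)
    finally show ?thesis .
  qed
  show ?thesis
    using lt[of a b] lt[of b a] eq by (cases a b rule: linorder_cases) (simp_all add: mult.commute)
qed

lemma Dg_he_single: "Dg (he a) = (if a = 0 then 1 else 0)"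
  using Dg_he_he[of a 0] by simp




definition restr :: "'b set \<Rightarrow> ('b \<Rightarrow> real) \<Rightarrow> 'b \<Rightarrow> real" where
  "restr S l = (\<lambda>a. if a \<in> S then l a else 0)"

definition box_set :: "'b set \<Rightarrow> real \<Rightarrow> ('b \<Rightarrow> real) set" where
  "box_set S R = {l. \<forall>a. l a \<in> (if a \<in> S then {-R..R} else {0})}"

lemma compact_box_set: "compact (box_set S R)"
proof -
  have "box_set S R = Pi\<^sub>E UNIV (\<lambda>a. if a \<in> S then {-R..R} else {0})"
    unfolding box_set_def by (auto simp: PiE_def Pi_def)
  moreover have "compactin (product_topology (\<lambda>_. euclidean) UNIV)
      (Pi\<^sub>E UNIV (\<lambda>a. if a \<in> S then {-R..R} else {0::real}))"
    by (subst compactin_PiE) auto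
  ultimately show ?thesis
    by (simp add: euclidean_product_topology)
qed

lemma cont_sum_abs: "continuous_on UNIV (\<lambda>y::'b \<Rightarrow> real. \<Sum>a\<in>S. w a * \<bar>y a - x a\<bar>)"
  by (intro continuous_intros continuous_on_product_coordinates)

lemma cont_sum_abs0: "continuous_on UNIV (\<lambda>y::'b \<Rightarrow> real. \<Sum>a\<in>S. \<bar>y a\<bar>)"
  by (intro continuous_intros continuous_on_product_coordinates)

lemma lip_cont:
  fixes F :: "('b \<Rightarrow> real) \<Rightarrow> real"
  assumes lip: "\<And>l m. \<bar>F l - F m\<bar> \<le> (\<Sum>a\<in>S. w a * \<bar>l a - m a\<bar>)"
  shows "continuous_on K F"
  unfolding continuous_on_def
proof (intro ballI)
  fix x assume "x \<in> K"
  define g where "g y = (\<Sum>a\<in>S. w a * \<bar>y a - x a\<bar>)" for y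
  have "continuous_on K g" unfolding g_def
    by (rule continuous_on_subset[OF cont_sum_abs]) simp
  then have "(g \<longlongrightarrow> g x) (at x within K)" using \<open>x \<in> K\<close>
    by (simp add: continuous_on_def)
  then have g0: "(g \<longlongrightarrow> 0) (at x within K)" by (simp add: g_def)
  have "((\<lambda>y. F y - F x) \<longlongrightarrow> 0) (at x within K)"
    by (rule Lim_null_comparison[OF _ g0]) (simp add: g_def lip)
  then show "(F \<longlongrightarrow> F x) (at x within K)" by (simp add: Lim_null[symmetric])
qed

lemma coercive_const:
  fixes f :: "('b \<Rightarrow> real) \<Rightarrow> real"
  assumes fin: "finite S"
    and rs: "\<And>l. f l = f (restr S l)"
    and lip: "\<And>l m. \<bar>f l - f m\<bar> \<le> (\<Sum>a\<in>S. w a * \<bar>l a - m a\<bar>)"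
    and hom: "\<And>t l. t \<ge> 0 \<Longrightarrow> f (\<lambda>a. t * l a) = t * f l"
    and pos: "\<And>l. (\<exists>a\<in>S. l a \<noteq> 0) \<Longrightarrow> f l > 0"
  shows "\<exists>c>0. \<forall>l. f l \<ge> c * (\<Sum>a\<in>S. \<bar>l a\<bar>)"
proof -
  have f0: "f (\<lambda>a. 0) = 0" using hom[of 0 "\<lambda>a. 0"] by simp
  have zero: "f l = 0" if "(\<Sum>a\<in>S. \<bar>l a\<bar>) = 0" for l
  proof -
    have "\<forall>a\<in>S. l a = 0" using that fin by (simp add: sum_nonneg_eq_0_iff)
    then have "restr S l = (\<lambda>a. 0)" by (auto simp: restr_def)
    then show ?thesis using rs[of l] f0 by simp
  qed
  show ?thesis
  proof (cases "S = {}")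
    case True
    then show ?thesis using zero by (intro exI[of _ 1]) simp
  next
    case False
    then obtain a0 where a0: "a0 \<in> S" by blast
    define K1 where "K1 = box_set S 1 \<inter> {l. (\<Sum>a\<in>S. \<bar>l a\<bar>) = 1}"
    have cK: "compact K1" unfolding K1_def
      by (intro compact_Int_closed compact_box_set closed_Collect_eq cont_sum_abs0) simp
    moreover have "(\<lambda>a. if a = a0 then 1 else 0) \<in> K1"
    proof -
      have "(\<Sum>a\<in>S. \<bar>if a = a0 then 1 else 0::real\<bar>) = (\<Sum>a\<in>S. if a = a0 then 1 else 0)"
        by (intro sum.cong) auto
      also have "\<dots> = 1" using a0 fin by simp
      finally have "(\<Sum>a\<in>S. \<bar>if a = a0 then 1 else 0::real\<bar>) = 1" .
      moreover have "(\<lambda>a. if a = a0 then 1 else 0::real) \<in> box_set S 1"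
        using a0 by (simp add: box_set_def)
      ultimately show ?thesis by (simp add: K1_def)
    qed
    then have nK: "K1 \<noteq> {}" by blast
    have ctK: "continuous_on K1 f" by (rule lip_cont[OF lip])
    obtain l0 where l0: "l0 \<in> K1" "\<And>l. l \<in> K1 \<Longrightarrow> f l0 \<le> f l"
      using continuous_attains_inf[OF cK nK ctK] by blast
    have "\<exists>a\<in>S. l0 a \<noteq> 0"
    proof (rule ccontr)
      assume "\<not> ?thesis"
      then have "(\<Sum>a\<in>S. \<bar>l0 a\<bar>) = 0" by simp
      then show False using l0(1) by (simp add: K1_def)
    qed
    then have c0: "f l0 > 0" by (rule pos)
    have "f l \<ge> f l0 * (\<Sum>a\<in>S. \<bar>l a\<bar>)" for l
    proof (cases "(\<Sum>a\<in>S. \<bar>l a\<bar>) = 0")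
      case True
      then show ?thesis using zero by simp
    next
      case False
      define s where "s = (\<Sum>a\<in>S. \<bar>l a\<bar>)"
      have s: "s > 0" using False unfolding s_def by (simp add: sum_nonneg order_le_neq_trans)
      define l' where "l' = (\<lambda>a. (1 / s) * restr S l a)"
      have "(\<Sum>a\<in>S. \<bar>l' a\<bar>) = (1/s) * s"
        unfolding l'_def s_def restr_def using s
        by (simp add: sum_distrib_left abs_mult s_def)
      then have "(\<Sum>a\<in>S. \<bar>l' a\<bar>) = 1" using s by simp
      moreover have "\<forall>a. l' a \<in> (if a \<in> S then {-1..1} else {0})"
      proof
        fix a
        show "l' a \<in> (if a \<in> S then {-1..1} else {0})"
        proof (cases "a \<in> S")
          case True
          have "\<bar>l a\<bar> \<le> s" unfolding s_def using True fin
            by (intro member_le_sum) auto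
          then have "\<bar>l a\<bar> / s \<le> 1" using s by simp
          then have "\<bar>l a / s\<bar> \<le> 1" using s by simp
          then have "-1 \<le> l a / s" "l a / s \<le> 1" by arith+
          moreover have "l' a = l a / s" using True by (simp add: l'_def restr_def)
          ultimately show ?thesis using True by simp
        qed (simp add: l'_def restr_def)
      qed
      ultimately have "l' \<in> K1" by (simp add: K1_def box_set_def)
      then have "f l0 \<le> f l'" by (rule l0)
      have "restr S l = (\<lambda>a. s * l' a)" using s by (auto simp: l'_def)
      then have "f l = s * f l'" using rs[of l] hom[of s l'] s by simp
      then show ?thesis using \<open>f l0 \<le> f l'\<close> s by (simp add: s_def[symmetric] mult.commute)
    qed
    then show ?thesis using c0 by blast
  qed
qed

lemma exists_min:
  fixes F :: "('b \<Rightarrow> real) \<Rightarrow> real"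
  assumes fin: "finite S"
    and rs: "\<And>l. F l = F (restr S l)"
    and lip: "\<And>l m. \<bar>F l - F m\<bar> \<le> (\<Sum>a\<in>S. w a * \<bar>l a - m a\<bar>)"
    and coer: "\<And>l. F l \<ge> c * (\<Sum>a\<in>S. \<bar>l a\<bar>) - C" and c: "c > 0"
  shows "\<exists>l0. (\<forall>a. a \<notin> S \<longrightarrow> l0 a = 0) \<and> (\<forall>l. F l0 \<le> F l)"
proof -
  define R where "R = (\<bar>C\<bar> + \<bar>F (\<lambda>a. 0)\<bar>) / c + 1"
  have "(\<bar>C\<bar> + \<bar>F (\<lambda>a. 0)\<bar>) / c \<ge> 0" using c by simp
  then have R0: "R > 0" unfolding R_def by linarith
  have "c * R = \<bar>C\<bar> + \<bar>F (\<lambda>a. 0)\<bar> + c" unfolding R_def using c by (simp add: field_simps)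
  then have cR: "c * R - C > F (\<lambda>a. 0)" using c by linarith
  define K where "K = box_set S R"
  have zK: "(\<lambda>a. 0) \<in> K" using R0 by (simp add: K_def box_set_def)
  have cK: "compact K" unfolding K_def by (rule compact_box_set)
  have nK: "K \<noteq> {}" using zK by blast
  have ctK: "continuous_on K F" by (rule lip_cont[OF lip])
  obtain l0 where l0: "l0 \<in> K" "\<And>l. l \<in> K \<Longrightarrow> F l0 \<le> F l"
    using continuous_attains_inf[OF cK nK ctK] by blast
  have "F l0 \<le> F l" for l
  proof (cases "restr S l \<in> K")
    case True
    then show ?thesis using l0(2) rs[of l] by simp
  next
    case False
    then obtain a where a: "a \<in> S" "\<bar>l a\<bar> > R"
      unfolding K_def box_set_def restr_def by (auto split: if_splits simp: abs_le_iff)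
    have "\<bar>l a\<bar> \<le> (\<Sum>a\<in>S. \<bar>l a\<bar>)" using a fin by (intro member_le_sum) auto
    then have "c * R < c * (\<Sum>a\<in>S. \<bar>l a\<bar>)" using a c by simp
    then have "F l > F (\<lambda>a. 0)" using coer[of l] cR by linarith
    then show ?thesis using l0(2)[OF zK] by linarith
  qed
  moreover have "\<forall>a. a \<notin> S \<longrightarrow> l0 a = 0"
  proof (intro allI impI)
    fix a assume "a \<notin> S"
    then show "l0 a = 0" using l0(1) unfolding K_def box_set_def
      by (metis (mono_tags, lifting) mem_Collect_eq singletonD)
  qed
  ultimately show ?thesis by blast
qed




locale bmset = prob_space M for M :: "'a measure" +
  fixes d n :: nat and T :: real and B :: "nat \<Rightarrow> real \<Rightarrow> 'a \<Rightarrow> real"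
  assumes T_pos: "T > 0" and n_pos: "n \<ge> 1" and BM: "std_BM M d T B"
begin

definition hh :: real where "hh = T / real n"
definition II :: "(nat \<times> nat) set" where "II = {..<d} \<times> {..<n}"
definition incr :: "nat \<times> nat \<Rightarrow> 'a \<Rightarrow> real" where
  "incr = (\<lambda>(j, i) \<omega>. B j (grid T n (Suc i)) \<omega> - B j (grid T n i) \<omega>)"
definition Gv :: "nat \<times> nat \<Rightarrow> 'a \<Rightarrow> real" where
  "Gv c \<omega> = incr c \<omega> / sqrt hh"

lemma hh_pos: "hh > 0"
  using T_pos n_pos by (simp add: hh_def)

lemma poly_meas[measurable]: "poly p \<in> borel_measurable borel"
  for p :: "real poly"
  by (intro borel_measurable_continuous_onI continuous_intros)

lemma poly_meas2: "(\<lambda>x. poly p (x / a)) \<in> borel_measurable borel"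
  for p :: "real poly"
  by (rule measurable_compose[OF _ poly_meas]) simp

lemma finite_II: "finite II"
  by (simp add: II_def)

lemma grid_diff: "grid T n (Suc i) - grid T n i = hh"
  by (simp add: grid_def hh_def algebra_simps add_divide_distrib)

lemma BM_facts:
  "prob_space.indep_vars M (\<lambda>_. borel) incr II \<and>
   (\<forall>j<d. \<forall>i<n. distributed M lborel (incr (j, i)) (normal_density 0 (sqrt hh)))"
proof -
  have mono: "\<forall>i<n. grid T n i < grid T n (Suc i)"
    using grid_diff hh_pos by (metis diff_gt_0_iff_gt)
  have g0: "0 \<le> grid T n 0" by (simp add: grid_def)
  have gn: "grid T n n \<le> T" using n_pos by (simp add: grid_def)
  have "prob_space.indep_vars M (\<lambda>_. borel)
          (\<lambda>(j, i) \<omega>. B j (grid T n (Suc i)) \<omega> - B j (grid T n i) \<omega>) ({..<d} \<times> {..<n}) \<and>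
        (\<forall>j<d. \<forall>i<n. distributed M lborel (\<lambda>\<omega>. B j (grid T n (Suc i)) \<omega> - B j (grid T n i) \<omega>)
                          (normal_density 0 (sqrt (grid T n (Suc i) - grid T n i))))"
    using BM mono g0 gn unfolding std_BM_def by blast
  then show ?thesis unfolding incr_def II_def grid_diff by simp
qed

lemma indep_incr: "indep_vars (\<lambda>_. borel) incr II"
  using BM_facts by simp

lemma dist_G: "c \<in> II \<Longrightarrow> distributed M lborel (Gv c) std_normal_density"
proof -
  assume "c \<in> II"
  then obtain j i where c: "c = (j, i)" "j < d" "i < n" by (auto simp: II_def)
  then have "distributed M lborel (incr c) (normal_density 0 (sqrt hh))" using BM_facts by simp
  then have "distributed M lborel (\<lambda>x. (incr c x - 0) / sqrt hh) std_normal_density"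
    using normal_standard_normal_convert[of "sqrt hh" "incr c" 0] hh_pos by simp
  then show ?thesis unfolding Gv_def[abs_def] by simp
qed

lemma poly_G:
  assumes "c \<in> II"
  shows "integrable M (\<lambda>\<omega>. poly s (Gv c \<omega>))" "(\<integral>\<omega>. poly s (Gv c \<omega>) \<partial>M) = Dg s"
proof -
  have D: "distributed M lborel (Gv c) std_normal_density" using assms by (rule dist_G)
  show "integrable M (\<lambda>\<omega>. poly s (Gv c \<omega>))"
    using distributed_integrable[OF D, of "poly s"] integrable_Dg[of s] poly_meas by simp
  show "(\<integral>\<omega>. poly s (Gv c \<omega>) \<partial>M) = Dg s"
    using distributed_integral[OF D, of "poly s"] unfolding Dg_def by simp
qed

lemma indep_poly_G: "indep_vars (\<lambda>_. borel) (\<lambda>c \<omega>. poly (s c) (Gv c \<omega>)) II"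
proof -
  have "indep_vars (\<lambda>_. borel) (\<lambda>c \<omega>. (\<lambda>x. poly (s c) (x / sqrt hh)) (incr c \<omega>)) II"
    by (rule indep_vars_compose2[OF indep_incr]) (simp add: poly_meas2)
  then show ?thesis by (simp add: Gv_def)
qed

lemma prod_poly_G:
  "integrable M (\<lambda>\<omega>. \<Prod>c\<in>II. poly (s c) (Gv c \<omega>))"
  "(\<integral>\<omega>. (\<Prod>c\<in>II. poly (s c) (Gv c \<omega>)) \<partial>M) = (\<Prod>c\<in>II. Dg (s c))"
proof -
  have int: "\<And>c. c \<in> II \<Longrightarrow> integrable M (\<lambda>\<omega>. poly (s c) (Gv c \<omega>))" using poly_G by blast
  show "integrable M (\<lambda>\<omega>. \<Prod>c\<in>II. poly (s c) (Gv c \<omega>))"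
    using indep_vars_integrable[OF finite_II indep_poly_G int] .
  show "(\<integral>\<omega>. (\<Prod>c\<in>II. poly (s c) (Gv c \<omega>)) \<partial>M) = (\<Prod>c\<in>II. Dg (s c))"
    using indep_vars_lebesgue_integral[OF finite_II indep_poly_G int] poly_G(2) by simp
qed

definition sal :: "(nat \<Rightarrow> nat \<Rightarrow> nat) \<Rightarrow> nat \<times> nat \<Rightarrow> nat" where
  "sal \<alpha> = (\<lambda>(j, i). \<alpha> j (Suc i))"

lemma hermite_prod_eq:
  "hermite_prod d n B T \<alpha> \<omega> = (\<Prod>c\<in>II. poly (he (sal \<alpha> c)) (Gv c \<omega>))"
proof -
  have "hermite_prod d n B T \<alpha> \<omega> =
     (\<Prod>j<d. \<Prod>i<n. poly (he (\<alpha> j (Suc i))) (Gincr B T n j (Suc i) \<omega>))"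
    unfolding hermite_prod_def hermite_he One_nat_def prod.atLeast1_atMost_eq ..
  also have "\<dots> = (\<Prod>j<d. \<Prod>i<n. poly (he (sal \<alpha> (j, i))) (Gv (j, i) \<omega>))"
    by (simp add: Gincr_def Gv_def incr_def sal_def hh_def)
  also have "\<dots> = (\<Prod>c\<in>II. poly (he (sal \<alpha> c)) (Gv c \<omega>))"
    unfolding II_def prod.cartesian_product by (simp add: case_prod_beta')
  finally show ?thesis .
qed

lemma Hp_int: "integrable M (hermite_prod d n B T \<alpha>)"
  unfolding hermite_prod_eq[abs_def] by (rule prod_poly_G)

lemma Hp_mean: "(\<integral>\<omega>. hermite_prod d n B T \<alpha> \<omega> \<partial>M) = (\<Prod>c\<in>II. if sal \<alpha> c = 0 then 1 else 0)"
  unfolding hermite_prod_eq prod_poly_G(2) by (simp add: Dg_he_single)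

lemma Hp2:
  "integrable M (\<lambda>\<omega>. hermite_prod d n B T \<alpha> \<omega> * hermite_prod d n B T \<beta> \<omega>)"
  "(\<integral>\<omega>. hermite_prod d n B T \<alpha> \<omega> * hermite_prod d n B T \<beta> \<omega> \<partial>M) =
     (\<Prod>c\<in>II. if sal \<alpha> c = sal \<beta> c then fact (sal \<alpha> c) else 0)"
proof -
  have eq: "hermite_prod d n B T \<alpha> \<omega> * hermite_prod d n B T \<beta> \<omega> =
     (\<Prod>c\<in>II. poly (he (sal \<alpha> c) * he (sal \<beta> c)) (Gv c \<omega>))" for \<omega>
    unfolding hermite_prod_eq prod.distrib[symmetric] by simp
  show "integrable M (\<lambda>\<omega>. hermite_prod d n B T \<alpha> \<omega> * hermite_prod d n B T \<beta> \<omega>)"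
    unfolding eq by (rule prod_poly_G)
  show "(\<integral>\<omega>. hermite_prod d n B T \<alpha> \<omega> * hermite_prod d n B T \<beta> \<omega> \<partial>M) =
     (\<Prod>c\<in>II. if sal \<alpha> c = sal \<beta> c then fact (sal \<alpha> c) else 0)"
    unfolding eq prod_poly_G(2) by (simp add: Dg_he_he)
qed

end




lemma finite_mindex: "finite (mindex_set d p n)"
proof -
  define D where "D = {..<d} \<times> {1..n}"
  define \<phi> where "\<phi> \<alpha> = restrict (\<lambda>(j, i). \<alpha> j i) D" for \<alpha> :: "nat \<Rightarrow> nat \<Rightarrow> nat"
  have supp: "\<alpha> j i = 0" if "\<alpha> \<in> mindex_set d p n" "(j, i) \<notin> D" for \<alpha> j i
    using that by (auto simp: mindex_set_def D_def)
  have bnd: "\<alpha> j i \<le> p" if "\<alpha> \<in> mindex_set d p n" "(j, i) \<in> D" for \<alpha> j i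
  proof -
    have "\<alpha> j i \<le> (\<Sum>i=1..n. \<alpha> j i)" using that by (intro member_le_sum) (auto simp: D_def)
    also have "\<dots> \<le> (\<Sum>j<d. \<Sum>i=1..n. \<alpha> j i)" using that
      by (intro member_le_sum[where f="\<lambda>j. \<Sum>i=1..n. \<alpha> j i"]) (auto simp: D_def)
    also have "\<dots> \<le> p" using that by (simp add: mindex_set_def)
    finally show ?thesis .
  qed
  have "inj_on \<phi> (mindex_set d p n)"
  proof (rule inj_onI)
    fix \<alpha> \<beta> assume ab: "\<alpha> \<in> mindex_set d p n" "\<beta> \<in> mindex_set d p n" "\<phi> \<alpha> = \<phi> \<beta>"
    show "\<alpha> = \<beta>"
    proof (intro ext)
      fix j i
      show "\<alpha> j i = \<beta> j i"
      proof (cases "(j, i) \<in> D")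
        case True
        then show ?thesis using fun_cong[OF ab(3), of "(j, i)"] by (simp add: \<phi>_def)
      next
        case False
        then show ?thesis using supp ab by metis
      qed
    qed
  qed
  moreover have "\<phi> ` mindex_set d p n \<subseteq> Pi\<^sub>E D (\<lambda>_. {..p})"
    using bnd by (auto simp: \<phi>_def)
  moreover have "finite (Pi\<^sub>E D (\<lambda>_. {..p}))" by (simp add: D_def finite_PiE)
  ultimately show ?thesis by (rule inj_on_finite)
qed

lemma zero_in_mindex: "zero_mindex \<in> mindex_set d p n"
  by (simp add: mindex_set_def zero_mindex_def)

lemma mindex_k_sub: "mindex_set_k d p n k \<subseteq> mindex_set d p n"
  by (auto simp: mindex_set_k_def)

lemma mindex_k0: "mindex_set_k d p n 0 = {zero_mindex}"
proof -
  have "\<alpha> = zero_mindex" if "\<alpha> \<in> mindex_set_k d p n 0" for \<alpha>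
  proof (intro ext)
    fix j i show "\<alpha> j i = zero_mindex j i"
      using that by (cases i) (auto simp: mindex_set_k_def mindex_set_def zero_mindex_def)
  qed
  then show ?thesis using zero_in_mindex by (auto simp: mindex_set_k_def zero_mindex_def)
qed

lemma mindex_kn: "mindex_set_k d p n n = mindex_set d p n"
  unfolding mindex_set_k_def mindex_set_def
  by auto (metis gr0I leD)

context bmset
begin

lemma sal_ne:
  assumes "\<alpha> \<in> mindex_set d p n" "\<beta> \<in> mindex_set d p n" "\<alpha> \<noteq> \<beta>"
  shows "\<exists>c\<in>II. sal \<alpha> c \<noteq> sal \<beta> c"
proof -
  obtain j i where ji: "\<alpha> j i \<noteq> \<beta> j i" using assms(3) by (meson ext)
  then have "\<alpha> j i \<noteq> 0 \<or> \<beta> j i \<noteq> 0" by auto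
  then have "j < d \<and> 1 \<le> i \<and> i \<le> n" using assms(1,2) by (auto simp: mindex_set_def)
  then obtain i' where "i = Suc i'" "i' < n" by (cases i) auto
  then show ?thesis using ji \<open>j < d \<and> 1 \<le> i \<and> i \<le> n\<close>
    by (intro bexI[of _ "(j, i')"]) (auto simp: sal_def II_def)
qed

lemma Hp_mean0:
  assumes "\<alpha> \<in> mindex_set d p n" "\<alpha> \<noteq> zero_mindex"
  shows "(\<integral>\<omega>. hermite_prod d n B T \<alpha> \<omega> \<partial>M) = 0"
proof -
  obtain c where "c \<in> II" "sal \<alpha> c \<noteq> sal zero_mindex c"
    using sal_ne[OF assms(1) zero_in_mindex assms(2)] by blast
  then have "c \<in> II" "sal \<alpha> c \<noteq> 0" by (auto simp: sal_def zero_mindex_def split: prod.splits)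
  then show ?thesis unfolding Hp_mean by (intro prod_zero finite_II) auto
qed

lemma Hp_orth:
  assumes "\<alpha> \<in> mindex_set d p n" "\<beta> \<in> mindex_set d p n" "\<alpha> \<noteq> \<beta>"
  shows "(\<integral>\<omega>. hermite_prod d n B T \<alpha> \<omega> * hermite_prod d n B T \<beta> \<omega> \<partial>M) = 0"
proof -
  obtain c where "c \<in> II" "sal \<alpha> c \<noteq> sal \<beta> c" using sal_ne[OF assms] by blast
  then show ?thesis unfolding Hp2(2) by (intro prod_zero finite_II) auto
qed

lemma Hp_sq_pos:
  "(\<integral>\<omega>. hermite_prod d n B T \<alpha> \<omega> * hermite_prod d n B T \<alpha> \<omega> \<partial>M) > 0"
  unfolding Hp2(2) by (simp add: prod_pos)

end




locale bmZ = bmset +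
  fixes Z :: "real \<Rightarrow> 'a \<Rightarrow> real" and p :: nat
  assumes Zint: "\<And>t. t \<in> {0..T} \<Longrightarrow> integrable M (Z t)"
begin

abbreviation AA where "AA \<equiv> mindex_set d p n"
abbreviation Hp where "Hp \<equiv> hermite_prod d n B T"
definition SS where "SS = AA - {zero_mindex}"
definition Xs :: "((nat \<Rightarrow> nat \<Rightarrow> nat) \<Rightarrow> real) \<Rightarrow> 'a \<Rightarrow> real" where
  "Xs lam \<omega> = (\<Sum>\<alpha>\<in>AA. lam \<alpha> * Hp \<alpha> \<omega>)"
definition mx where "mx lam \<omega> = (MAX k\<in>{0..n}. v_pn d B T Z p n lam k \<omega>)"

lemma V_eq: "V_pn M d B T Z p n lam = (\<integral>\<omega>. mx lam \<omega> \<partial>M)"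
  unfolding V_pn_def mx_def ..

lemma finite_AA: "finite AA" by (rule finite_mindex)
lemma finite_SS: "finite SS" by (simp add: SS_def finite_AA)
lemma SS_sub: "SS \<subseteq> AA" by (auto simp: SS_def)
lemma finite_Ak: "finite (mindex_set_k d p n k)"
  using finite_subset[OF mindex_k_sub finite_AA] .

lemma grid_in: "k \<le> n \<Longrightarrow> grid T n k \<in> {0..T}"
  using T_pos n_pos by (auto simp: grid_def field_simps)

lemma v_int: "k \<le> n \<Longrightarrow> integrable M (v_pn d B T Z p n lam k)"
  unfolding v_pn_def[abs_def]
  by (auto simp: Hp_int intro!: Zint grid_in)

lemma mx_int: "integrable M (mx lam)"
  unfolding mx_def[abs_def] by (rule integrable_MAX) (auto intro: v_int)

lemma Xs_int: "integrable M (Xs lam)"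
  unfolding Xs_def[abs_def] by (auto simp: Hp_int)

definition ww where "ww \<alpha> = (\<integral>\<omega>. \<bar>Hp \<alpha> \<omega>\<bar> \<partial>M)"

lemma W_int: "integrable M (\<lambda>\<omega>. \<Sum>\<alpha>\<in>AA. \<bar>lam \<alpha> - mu \<alpha>\<bar> * \<bar>Hp \<alpha> \<omega>\<bar>)"
  by (auto simp: Hp_int)

lemma W_integral: "(\<integral>\<omega>. (\<Sum>\<alpha>\<in>AA. \<bar>lam \<alpha> - mu \<alpha>\<bar> * \<bar>Hp \<alpha> \<omega>\<bar>) \<partial>M) = (\<Sum>\<alpha>\<in>AA. \<bar>lam \<alpha> - mu \<alpha>\<bar> * ww \<alpha>)"
  unfolding ww_def
  by (simp add: Hp_int)

lemma mx_le: "mx lam \<omega> \<le> mx mu \<omega> + (\<Sum>\<alpha>\<in>AA. \<bar>lam \<alpha> - mu \<alpha>\<bar> * \<bar>Hp \<alpha> \<omega>\<bar>)"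
proof -
  have "v_pn d B T Z p n lam k \<omega> \<le> mx mu \<omega> + (\<Sum>\<alpha>\<in>AA. \<bar>lam \<alpha> - mu \<alpha>\<bar> * \<bar>Hp \<alpha> \<omega>\<bar>)"
    if k: "k \<in> {0..n}" for k
  proof -
    have "v_pn d B T Z p n lam k \<omega> - v_pn d B T Z p n mu k \<omega> =
       (\<Sum>\<alpha>\<in>mindex_set_k d p n k. (mu \<alpha> - lam \<alpha>) * Hp \<alpha> \<omega>)"
      unfolding v_pn_def by (simp add: sum_subtractf[symmetric] algebra_simps)
    also have "\<dots> \<le> (\<Sum>\<alpha>\<in>mindex_set_k d p n k. \<bar>lam \<alpha> - mu \<alpha>\<bar> * \<bar>Hp \<alpha> \<omega>\<bar>)"
      by (intro sum_mono) (metis abs_ge_self abs_minus_commute abs_mult)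
    also have "\<dots> \<le> (\<Sum>\<alpha>\<in>AA. \<bar>lam \<alpha> - mu \<alpha>\<bar> * \<bar>Hp \<alpha> \<omega>\<bar>)"
      by (intro sum_mono2 finite_AA mindex_k_sub) auto
    finally have 1: "v_pn d B T Z p n lam k \<omega> \<le> v_pn d B T Z p n mu k \<omega> + (\<Sum>\<alpha>\<in>AA. \<bar>lam \<alpha> - mu \<alpha>\<bar> * \<bar>Hp \<alpha> \<omega>\<bar>)"
      by simp
    have "v_pn d B T Z p n mu k \<omega> \<le> mx mu \<omega>" unfolding mx_def using k by (intro Max_ge) auto
    then show ?thesis using 1 by simp
  qed
  then show ?thesis unfolding mx_def[of lam] by (subst Max_le_iff) auto
qed

lemma V_lip: "\<bar>V_pn M d B T Z p n lam - V_pn M d B T Z p n mu\<bar> \<le> (\<Sum>\<alpha>\<in>AA. \<bar>lam \<alpha> - mu \<alpha>\<bar> * ww \<alpha>)"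
proof -
  have one: "V_pn M d B T Z p n lam \<le> V_pn M d B T Z p n mu + (\<Sum>\<alpha>\<in>AA. \<bar>lam \<alpha> - mu \<alpha>\<bar> * ww \<alpha>)"
    for lam mu
  proof -
    have "(\<integral>\<omega>. mx lam \<omega> \<partial>M) \<le> (\<integral>\<omega>. mx mu \<omega> + (\<Sum>\<alpha>\<in>AA. \<bar>lam \<alpha> - mu \<alpha>\<bar> * \<bar>Hp \<alpha> \<omega>\<bar>) \<partial>M)"
      by (intro integral_mono mx_int mx_le) (auto intro: mx_int W_int)
    also have "\<dots> = (\<integral>\<omega>. mx mu \<omega> \<partial>M) + (\<Sum>\<alpha>\<in>AA. \<bar>lam \<alpha> - mu \<alpha>\<bar> * ww \<alpha>)"
      using Bochner_Integration.integral_add[OF mx_int[of mu] W_int[of lam mu]] W_integral by simp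
    finally show ?thesis unfolding V_eq .
  qed
  show ?thesis using one[of lam mu] one[of mu lam] by (simp add: abs_minus_commute abs_le_iff)
qed

lemma V_cong: "(\<And>\<alpha>. \<alpha> \<in> AA \<Longrightarrow> lam \<alpha> = mu \<alpha>) \<Longrightarrow> V_pn M d B T Z p n lam = V_pn M d B T Z p n mu"
  using V_lip[of lam mu] by (simp add: sum.neutral)

lemma v0: "lam zero_mindex = 0 \<Longrightarrow> v_pn d B T Z p n lam 0 \<omega> = Z 0 \<omega>"
  unfolding v_pn_def mindex_k0 by (simp add: grid_def)

lemma vn: "v_pn d B T Z p n lam n \<omega> = Z T \<omega> - Xs lam \<omega>"
  unfolding v_pn_def mindex_kn Xs_def using n_pos by (simp add: grid_def)

lemma V_lower:
  assumes "lam zero_mindex = 0"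
  shows "V_pn M d B T Z p n lam \<ge> (\<integral>\<omega>. max 0 (- Xs lam \<omega>) \<partial>M) - ((\<integral>\<omega>. \<bar>Z 0 \<omega>\<bar> \<partial>M) + (\<integral>\<omega>. \<bar>Z T \<omega>\<bar> \<partial>M))"
proof -
  have Z0: "integrable M (Z 0)" using T_pos by (intro Zint) simp
  have ZT: "integrable M (Z T)" using T_pos by (intro Zint) simp
  have pw: "max 0 (- Xs lam \<omega>) - (\<bar>Z 0 \<omega>\<bar> + \<bar>Z T \<omega>\<bar>) \<le> mx lam \<omega>" for \<omega>
  proof -
    have a: "Z 0 \<omega> \<le> mx lam \<omega>" unfolding mx_def v0[of lam \<omega>, OF assms, symmetric] by (intro Max_ge) auto
    have b: "Z T \<omega> - Xs lam \<omega> \<le> mx lam \<omega>" unfolding mx_def vn[symmetric] by (intro Max_ge) auto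
    show ?thesis using a b by (cases "Xs lam \<omega> \<ge> 0") (auto simp: max_def)
  qed
  have "(\<integral>\<omega>. max 0 (- Xs lam \<omega>) - (\<bar>Z 0 \<omega>\<bar> + \<bar>Z T \<omega>\<bar>) \<partial>M) \<le> (\<integral>\<omega>. mx lam \<omega> \<partial>M)"
    by (intro integral_mono pw mx_int) (auto simp: Z0 ZT Xs_int)
  also have "(\<integral>\<omega>. max 0 (- Xs lam \<omega>) - (\<bar>Z 0 \<omega>\<bar> + \<bar>Z T \<omega>\<bar>) \<partial>M) =
     (\<integral>\<omega>. max 0 (- Xs lam \<omega>) \<partial>M) - ((\<integral>\<omega>. \<bar>Z 0 \<omega>\<bar> \<partial>M) + (\<integral>\<omega>. \<bar>Z T \<omega>\<bar> \<partial>M))"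
    by (simp add: Z0 ZT Xs_int)
  finally show ?thesis unfolding V_eq .
qed

end




context bmZ
begin

lemma EX0:
  assumes "\<And>a. a \<notin> SS \<Longrightarrow> l a = 0"
  shows "(\<integral>\<omega>. Xs l \<omega> \<partial>M) = 0"
proof -
  have "(\<integral>\<omega>. Xs l \<omega> \<partial>M) = (\<Sum>\<alpha>\<in>AA. l \<alpha> * (\<integral>\<omega>. Hp \<alpha> \<omega> \<partial>M))"
    unfolding Xs_def by (simp add: Hp_int)
  also have "\<dots> = 0"
  proof (intro sum.neutral ballI)
    fix \<alpha> assume "\<alpha> \<in> AA"
    show "l \<alpha> * (\<integral>\<omega>. Hp \<alpha> \<omega> \<partial>M) = 0"
    proof (cases "\<alpha> \<in> SS")
      case True
      then show ?thesis using Hp_mean0[of \<alpha> p] by (simp add: SS_def)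
    qed (simp add: assms)
  qed
  finally show ?thesis .
qed

lemma EXH:
  assumes "\<beta> \<in> AA"
  shows "(\<integral>\<omega>. Xs l \<omega> * Hp \<beta> \<omega> \<partial>M) = l \<beta> * (\<integral>\<omega>. Hp \<beta> \<omega> * Hp \<beta> \<omega> \<partial>M)"
proof -
  have "(\<integral>\<omega>. Xs l \<omega> * Hp \<beta> \<omega> \<partial>M) = (\<integral>\<omega>. (\<Sum>\<alpha>\<in>AA. l \<alpha> * (Hp \<alpha> \<omega> * Hp \<beta> \<omega>)) \<partial>M)"
    unfolding Xs_def by (simp add: sum_distrib_right mult.assoc)
  also have "\<dots> = (\<Sum>\<alpha>\<in>AA. l \<alpha> * (\<integral>\<omega>. Hp \<alpha> \<omega> * Hp \<beta> \<omega> \<partial>M))"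
    by (simp add: Hp2(1))
  also have "\<dots> = (\<Sum>\<alpha>\<in>AA. if \<alpha> = \<beta> then l \<beta> * (\<integral>\<omega>. Hp \<beta> \<omega> * Hp \<beta> \<omega> \<partial>M) else 0)"
    by (intro sum.cong refl) (auto simp: Hp_orth assms)
  also have "\<dots> = l \<beta> * (\<integral>\<omega>. Hp \<beta> \<omega> * Hp \<beta> \<omega> \<partial>M)"
    using assms finite_AA by simp
  finally show ?thesis .
qed

lemma f_pos:
  assumes off: "\<And>a. a \<notin> SS \<Longrightarrow> l a = 0" and nz: "\<exists>a\<in>SS. l a \<noteq> 0"
  shows "(\<integral>\<omega>. max 0 (- Xs l \<omega>) \<partial>M) > 0"
proof (rule ccontr)
  assume "\<not> ?thesis"
  moreover have "(\<integral>\<omega>. max 0 (- Xs l \<omega>) \<partial>M) \<ge> 0" by (intro Bochner_Integration.integral_nonneg) simp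
  ultimately have "(\<integral>\<omega>. max 0 (- Xs l \<omega>) \<partial>M) = 0" by linarith
  then have "AE \<omega> in M. max 0 (- Xs l \<omega>) = 0"
    by (subst integral_nonneg_eq_0_iff_AE[symmetric]) (auto simp: Xs_int)
  then have "AE \<omega> in M. 0 \<le> Xs l \<omega>"
    by eventually_elim (auto simp: max_def split: if_splits)
  moreover have "(\<integral>\<omega>. Xs l \<omega> \<partial>M) = 0" using off by (rule EX0)
  ultimately have "AE \<omega> in M. Xs l \<omega> = 0"
    using integral_nonneg_eq_0_iff_AE[OF Xs_int[of l]] by simp
  then have AEz: "AE \<omega> in M. Xs l \<omega> * Hp \<beta> \<omega> = 0" for \<beta>
    by eventually_elim simp
  obtain \<beta> where b: "\<beta> \<in> SS" "l \<beta> \<noteq> 0" using nz by blast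
  then have "\<beta> \<in> AA" by (simp add: SS_def)
  have "l \<beta> * (\<integral>\<omega>. Hp \<beta> \<omega> * Hp \<beta> \<omega> \<partial>M) = 0"
    using EXH[OF \<open>\<beta> \<in> AA\<close>, of l] integral_eq_zero_AE[OF AEz[of \<beta>]] by simp
  then show False using b Hp_sq_pos[of \<beta>] by simp
qed

lemma sum_restr:
  "(\<Sum>\<alpha>\<in>AA. \<bar>restr SS l \<alpha> - restr SS m \<alpha>\<bar> * ww \<alpha>) = (\<Sum>a\<in>SS. ww a * \<bar>l a - m a\<bar>)"
proof -
  have "(\<Sum>\<alpha>\<in>AA. \<bar>restr SS l \<alpha> - restr SS m \<alpha>\<bar> * ww \<alpha>) = (\<Sum>\<alpha>\<in>SS. \<bar>restr SS l \<alpha> - restr SS m \<alpha>\<bar> * ww \<alpha>)"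
    by (rule sum.mono_neutral_right[OF finite_AA SS_sub]) (auto simp: restr_def)
  also have "\<dots> = (\<Sum>a\<in>SS. ww a * \<bar>l a - m a\<bar>)"
    by (intro sum.cong refl) (simp add: restr_def mult.commute)
  finally show ?thesis .
qed

lemma restr_idem: "restr S (restr S l) = restr S l"
  by (simp add: restr_def fun_eq_iff)

lemma Xs_diff: "\<bar>Xs a \<omega> - Xs b \<omega>\<bar> \<le> (\<Sum>\<alpha>\<in>AA. \<bar>a \<alpha> - b \<alpha>\<bar> * \<bar>Hp \<alpha> \<omega>\<bar>)"
proof -
  have "Xs a \<omega> - Xs b \<omega> = (\<Sum>\<alpha>\<in>AA. (a \<alpha> - b \<alpha>) * Hp \<alpha> \<omega>)"
    unfolding Xs_def by (simp add: sum_subtractf[symmetric] left_diff_distrib)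
  then show ?thesis by (simp add: order_trans[OF sum_abs] abs_mult)
qed

lemma main_exists:
  "\<exists>lam. lam zero_mindex = 0 \<and>
     (\<forall>\<mu>. \<mu> zero_mindex = 0 \<longrightarrow> V_pn M d B T Z p n lam \<le> V_pn M d B T Z p n \<mu>)"
proof -
  define F where "F l = V_pn M d B T Z p n (restr SS l)" for l
  define f where "f l = (\<integral>\<omega>. max 0 (- Xs (restr SS l) \<omega>) \<partial>M)" for l
  define C where "C = (\<integral>\<omega>. \<bar>Z 0 \<omega>\<bar> \<partial>M) + (\<integral>\<omega>. \<bar>Z T \<omega>\<bar> \<partial>M)"
  have z: "zero_mindex \<notin> SS" by (simp add: SS_def)
  have frs: "f l = f (restr SS l)" for l unfolding f_def restr_idem ..
  have flip: "\<bar>f l - f m\<bar> \<le> (\<Sum>a\<in>SS. ww a * \<bar>l a - m a\<bar>)" for l m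
  proof -
    let ?a = "restr SS l" and ?b = "restr SS m"
    have "\<bar>f l - f m\<bar> = \<bar>\<integral>\<omega>. max 0 (- Xs ?a \<omega>) - max 0 (- Xs ?b \<omega>) \<partial>M\<bar>"
      unfolding f_def by (subst Bochner_Integration.integral_diff) (auto simp: Xs_int)
    also have "\<dots> \<le> (\<integral>\<omega>. \<bar>max 0 (- Xs ?a \<omega>) - max 0 (- Xs ?b \<omega>)\<bar> \<partial>M)"
      using integral_norm_bound[of M "\<lambda>\<omega>. max 0 (- Xs ?a \<omega>) - max 0 (- Xs ?b \<omega>)"] by simp
    also have "\<dots> \<le> (\<integral>\<omega>. (\<Sum>\<alpha>\<in>AA. \<bar>?a \<alpha> - ?b \<alpha>\<bar> * \<bar>Hp \<alpha> \<omega>\<bar>) \<partial>M)"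
    proof (intro integral_mono W_int)
      show "integrable M (\<lambda>\<omega>. \<bar>max 0 (- Xs ?a \<omega>) - max 0 (- Xs ?b \<omega>)\<bar>)"
        by (auto simp: Xs_int)
      fix \<omega>
      have "\<bar>max 0 (- Xs ?a \<omega>) - max 0 (- Xs ?b \<omega>)\<bar> \<le> \<bar>Xs ?a \<omega> - Xs ?b \<omega>\<bar>"
        by (simp add: max_def abs_if)
      then show "\<bar>max 0 (- Xs ?a \<omega>) - max 0 (- Xs ?b \<omega>)\<bar> \<le> (\<Sum>\<alpha>\<in>AA. \<bar>?a \<alpha> - ?b \<alpha>\<bar> * \<bar>Hp \<alpha> \<omega>\<bar>)"
        using Xs_diff[of ?a \<omega> ?b] by linarith
    qed
    also have "\<dots> = (\<Sum>a\<in>SS. ww a * \<bar>l a - m a\<bar>)"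
      unfolding W_integral sum_restr ..
    finally show ?thesis .
  qed
  have fhom: "f (\<lambda>a. t * l a) = t * f l" if t: "t \<ge> 0" for t l
  proof -
    have r: "restr SS (\<lambda>a. t * l a) = (\<lambda>a. t * restr SS l a)" by (simp add: restr_def fun_eq_iff)
    have x: "Xs (\<lambda>a. t * g a) \<omega> = t * Xs g \<omega>" for g \<omega>
      unfolding Xs_def by (simp add: sum_distrib_left mult.assoc)
    have m: "max 0 (- (t * y)) = t * max 0 (- y)" for y :: real
      using t by (cases "y \<ge> 0") (auto simp: max_def mult_le_0_iff zero_le_mult_iff)
    show ?thesis unfolding f_def r x m by simp
  qed
  have fpos: "f l > 0" if "\<exists>a\<in>SS. l a \<noteq> 0" for l
    unfolding f_def using that by (intro f_pos) (auto simp: restr_def)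
  obtain c where c: "c > 0" "\<And>l. f l \<ge> c * (\<Sum>a\<in>SS. \<bar>l a\<bar>)"
    using coercive_const[OF finite_SS frs flip fhom fpos] by blast
  have Frs: "F l = F (restr SS l)" for l unfolding F_def restr_idem ..
  have Flip: "\<bar>F l - F m\<bar> \<le> (\<Sum>a\<in>SS. ww a * \<bar>l a - m a\<bar>)" for l m
    unfolding F_def using V_lip[of "restr SS l" "restr SS m"] sum_restr by simp
  have Fco: "F l \<ge> c * (\<Sum>a\<in>SS. \<bar>l a\<bar>) - C" for l
  proof -
    have "F l \<ge> f l - C" unfolding F_def f_def C_def
      by (rule V_lower) (simp add: restr_def z)
    then show ?thesis using c(2)[of l] by linarith
  qed
  obtain l0 where l0: "\<forall>a. a \<notin> SS \<longrightarrow> l0 a = 0" "\<forall>l. F l0 \<le> F l"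
    using exists_min[OF finite_SS Frs Flip Fco c(1)] by blast
  have r0: "restr SS l0 = l0" using l0(1) by (auto simp: restr_def fun_eq_iff)
  have "V_pn M d B T Z p n l0 \<le> V_pn M d B T Z p n \<mu>" if "\<mu> zero_mindex = 0" for \<mu>
  proof -
    have "V_pn M d B T Z p n \<mu> = F \<mu>" unfolding F_def
      by (rule V_cong) (auto simp: restr_def SS_def that)
    moreover have "V_pn M d B T Z p n l0 = F l0" unfolding F_def r0 ..
    ultimately show ?thesis using l0(2) by simp
  qed
  moreover have "l0 zero_mindex = 0" using l0(1) z by blast
  ultimately show ?thesis by blast
qed

end




lemma ennreal_le_1_sq: "(x::ennreal) \<le> 1 + x ^ 2"
proof (cases "x \<le> 1")
  case True
  then show ?thesis by (metis add_increasing2 zero_le order_trans order_refl)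
next
  case False
  then have "1 \<le> x" by simp
  then have "x * 1 \<le> x * x" by (intro mult_left_mono) auto
  then have "x \<le> x ^ 2" by (simp add: power2_eq_square)
  then show ?thesis by (metis add.commute add_increasing2 zero_le)
qed

theorem proposition3p1:
  fixes M :: "'a measure" and d n p :: nat and T :: real
    and B :: "nat \<Rightarrow> real \<Rightarrow> 'a \<Rightarrow> real" and Z :: "real \<Rightarrow> 'a \<Rightarrow> real"
  assumes "prob_space M"
    and "T > 0" and "d \<ge> 1"
    and "std_BM M d T B"
    and "\<forall>t\<in>{0..T}. Z t \<in> borel_measurable (BM_filtration M d B t)"
    and "\<forall>\<omega>\<in>space M. \<forall>t\<in>{0..T}. continuous (at t within {t..T}) (\<lambda>s. Z s \<omega>)"
    and "(\<lambda>\<omega>. SUP t\<in>{0..T}. ennreal \<bar>Z t \<omega>\<bar>) \<in> borel_measurable M"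
    and "(\<integral>\<^sup>+\<omega>. (SUP t\<in>{0..T}. ennreal \<bar>Z t \<omega>\<bar>) ^ 2 \<partial>M) < \<infinity>"
    and "p \<ge> 1" and "n \<ge> 1"
  shows "\<exists>lam. lam zero_mindex = 0 \<and>
           (\<forall>\<mu>. \<mu> zero_mindex = 0 \<longrightarrow> V_pn M d B T Z p n lam \<le> V_pn M d B T Z p n \<mu>)"
proof -
  note PS = assms(1)
  interpret bmset M d n T B
    using assms(2,4,10) by (intro bmset.intro bmset_axioms.intro PS) simp_all
  have Bm: "B j s \<in> borel_measurable M" if "j < d" "s \<in> {0..T}" for j s
    using assms(4) that unfolding std_BM_def by blast
  have Zint: "integrable M (Z t)" if t: "t \<in> {0..T}" for t
  proof -
    define G where "G = {B j s -` A \<inter> space M | j s A. j < d \<and> s \<in> {0..t} \<and> A \<in> sets borel} \<union> null_sets M"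
    have GM: "G \<subseteq> sets M"
    proof
      fix X assume "X \<in> G"
      then show "X \<in> sets M"
      proof (cases "X \<in> null_sets M")
        case False
        then obtain j s A where "X = B j s -` A \<inter> space M" "j < d" "s \<in> {0..t}" "A \<in> sets borel"
          using \<open>X \<in> G\<close> unfolding G_def by blast
        moreover have "s \<in> {0..T}" using \<open>s \<in> {0..t}\<close> t by auto
        ultimately show ?thesis using Bm by (auto intro: measurable_sets)
      qed auto
    qed
    then have GP: "G \<subseteq> Pow (space M)" using sets.sets_into_space by blast
    have sub: "subalgebra M (BM_filtration M d B t)"
      unfolding subalgebra_def BM_filtration_def G_def[symmetric]
      using sets_measure_of[OF GP] space_measure_of[OF GP] sets.sigma_sets_subset[OF GM] by simp
    have Zm: "Z t \<in> borel_measurable M"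
      using measurable_from_subalg[OF sub] assms(5) t by blast
    define S where "S \<omega> = (SUP t\<in>{0..T}. ennreal \<bar>Z t \<omega>\<bar>)" for \<omega>
    have Sm: "S \<in> borel_measurable M" unfolding S_def using assms(7) by simp
    have "(\<integral>\<^sup>+\<omega>. ennreal (norm (Z t \<omega>)) \<partial>M) \<le> (\<integral>\<^sup>+\<omega>. 1 + S \<omega> ^ 2 \<partial>M)"
    proof (intro nn_integral_mono)
      fix \<omega>
      have "ennreal \<bar>Z t \<omega>\<bar> \<le> S \<omega>" unfolding S_def using t by (intro SUP_upper)
      also have "\<dots> \<le> 1 + S \<omega> ^ 2" by (rule ennreal_le_1_sq)
      finally show "ennreal (norm (Z t \<omega>)) \<le> 1 + S \<omega> ^ 2" by simp
    qed
    also have "\<dots> = (\<integral>\<^sup>+\<omega>. 1 \<partial>M) + (\<integral>\<^sup>+\<omega>. S \<omega> ^ 2 \<partial>M)"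
      using Sm by (intro nn_integral_add) auto
    also have "\<dots> < \<infinity>"
      using assms(8) by (simp add: S_def emeasure_space_1)
    finally show ?thesis by (intro integrableI_bounded Zm)
  qed
  interpret bmZ M d n T B Z p
    by unfold_locales (rule Zint)
  show ?thesis by (rule main_exists)
qed


end
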